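(* For $n\geq1$ let $\ell_n=\sqrt[n]{n!}$ and $x_n=\log(\ell_{n+1}/\ell_n)$. Then for every integer $n\geq 2$, $$x_n\leq \frac1n-\frac{\log n}{2n(n+1)}-\frac{\log(2\pi)}{2n(n+1)}-\frac{83}{144n^3}+\frac{3}{2n^4},$$ and for every integer $n\geq3$, $$x_n\leq \frac1n-\frac{\log n}{2n(n+1)}-\frac{\log(2\pi)}{2n(n+1)}.$$
   Context: $\log$ denotes the natural logarithm. *)

theory Defs
  imports Complex_Main
begin

definition ell :: "nat \<Rightarrow> real" where
  "ell n = root n (fact n)"

definition xseq :: "nat \<Rightarrow> real" where
  "xseq n = ln (ell (n + 1) / ell n)"

end

theory Submission imports Defs "HOL-Analysis.Analysis" "HOL-Real_Asymp.Real_Asymp" begin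

lemma ln_lower:
  fixes t :: real assumes "0 \<le> t" "t < 1"
  shows "2*t + 2*t^3/3 \<le> ln (1+t) - ln (1-t)"
proof -
  let ?f = "\<lambda>x::real. ln (1+x) - ln (1-x) - 2*x - 2*x^3/3"
  have "?f 0 \<le> ?f t"
  proof (rule DERIV_nonneg_imp_nondecreasing[OF assms(1)])
    fix x assume x: "0 \<le> x" "x \<le> t"
    hence x1: "x < 1" using assms by simp
    have "DERIV ?f x :> (1/(1+x) - (-1)/(1-x) - 2 - 2*(3*x^2)/3)"
      using x x1 by (auto intro!: derivative_eq_intros)
    moreover have "1/(1+x) - (-1)/(1-x) - 2 - 2*(3*x^2)/3 = 2*x^4/(1-x^2)"
    proof -
      have "1 - x^2 > 0" "1+x>0" "1-x>0" using x x1 by (auto simp: power2_eq_square) (metis abs_of_nonneg less_eq_real_def mult_le_one not_less x1 abs_square_less_1 power2_eq_square)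
      thus ?thesis by (simp add: field_simps power2_eq_square power4_eq_xxxx)
    qed
    moreover have "2*x^4/(1-x^2) \<ge> 0"
      using x x1 by (intro divide_nonneg_nonneg) (auto simp: power2_eq_square abs_square_le_1 intro!: mult_le_one)
    ultimately show "\<exists>y. DERIV ?f x :> y \<and> y \<ge> 0" by auto
  qed
  thus ?thesis by simp
qed

lemma ln_upper:
  fixes x :: real assumes "0 \<le> x"
  shows "ln (1+x) \<le> x - x^2/2 + x^3/3"
proof -
  let ?f = "\<lambda>y::real. y - y^2/2 + y^3/3 - ln (1+y)"
  have "?f 0 \<le> ?f x"
  proof (rule DERIV_nonneg_imp_nondecreasing[OF assms(1)])
    fix y assume y: "0 \<le> y" "y \<le> x"
    have "DERIV ?f y :> (1 - 2*y/2 + 3*y^2/3 - 1/(1+y))"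
      using y by (auto intro!: derivative_eq_intros simp: power2_eq_square)
    moreover have "1 - 2*y/2 + 3*y^2/3 - 1/(1+y) = y^3/(1+y)"
      using y by (simp add: field_simps power2_eq_square power3_eq_cube)
    moreover have "y^3/(1+y) \<ge> 0" using y by simp
    ultimately show "\<exists>z. DERIV ?f y :> z \<and> z \<ge> 0" by auto
  qed
  thus ?thesis by simp
qed


definition rr :: "nat \<Rightarrow> real" where
  "rr n = ln (fact n) - (real n + 1/2) * ln (real n) + real n"

lemma ln_fact_Suc: "ln (fact (Suc n) :: real) = ln (real n + 1) + ln (fact n)"
  by (simp add: ln_mult add.commute)

lemma rr_diff:
  assumes "n \<ge> 1"
  shows "rr n - rr (Suc n) = (real n + 1/2) * (ln (real n + 1) - ln (real n)) - 1"
  unfolding rr_def ln_fact_Suc by (simp add: algebra_simps)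

lemma rr_diff_lower:
  assumes "n \<ge> 1"
  shows "rr n - rr (Suc n) \<ge> 1/(12*(real n+1)) - 1/(12*(real n+2))"
proof -
  define t :: real where "t = 1/(2*n+1)"
  have t0: "0 \<le> t" "t < 1" using assms by (auto simp: t_def)
  have e1: "1 + t = (2*n+2)/(2*n+1)" "1 - t = 2*n/(2*n+1)" using assms by (auto simp: t_def field_simps)
  have "ln (1+t) - ln (1-t) = ln (real n + 1) - ln (real n)"
    unfolding e1 using assms ln_mult[of 2 "real n+1"] ln_mult[of "real n" 2] by (simp add: ln_div algebra_simps)
  with ln_lower[OF t0] have L: "2*t + 2*t^3/3 \<le> ln (real n + 1) - ln (real n)" by simp
  have "(real n + 1/2) * (2*t + 2*t^3/3) - 1 = 1/(3*(2*real n+1)^2)"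
  proof -
    have tu: "(2*real n+1)*t = 1" unfolding t_def by simp
    have "(real n + 1/2) * (2*t + 2*t^3/3) = ((2*real n+1)*t) * (1 + t^2/3)"
      by (simp add: algebra_simps power2_eq_square power3_eq_cube)
    also have "\<dots> = 1 + t^2/3" using tu by simp
    also have "t^2 = 1/(2*real n+1)^2" unfolding t_def by (simp add: power_divide)
    finally show ?thesis by simp
  qed
  moreover have "(real n + 1/2) * (2*t + 2*t^3/3) \<le> (real n + 1/2) * (ln (real n + 1) - ln (real n))"
    using L by (intro mult_left_mono) auto
  moreover have "1/(12*(real n+1)) - 1/(12*(real n+2)) \<le> 1/(3*(2*real n+1)^2)"
  proof -
    have g: "\<And>a b::real. a > 0 \<Longrightarrow> b = a + 1 \<Longrightarrow> 1/(12*a) - 1/(12*b) = 1/(12*(a*b))"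
      by (simp add: field_simps)
    have "1/(12*(real n+1)) - 1/(12*(real n+2)) = 1/(12*((real n+1)*(real n+2)))"
      by (rule g) auto
    also have "\<dots> \<le> 1/(3*(2*real n+1)^2)"
    proof -
      have a: "3 * (2 * real n + 1)\<^sup>2 \<le> 12 * ((real n + 1) * (real n + 2))"
        by (simp add: power2_eq_square algebra_simps)
      have b: "0 < 12 * ((real n + 1) * (real n + 2)) * (3 * (2 * real n + 1)\<^sup>2)"
        by (intro mult_pos_pos) auto
      show ?thesis using divide_left_mono[OF a _ b, of 1] by simp
    qed
    finally show ?thesis .
  qed
  ultimately show ?thesis using rr_diff[OF assms] by linarith
qed

lemma wallis_id:
  "(\<Prod>k=1..n. (4*real k^2) / (4*real k^2 - 1)) = 16^n * (fact n)^4 / ((fact (2*n))^2 * (2*real n+1))"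
proof (induction n)
  case 0 then show ?case by simp
next
  case (Suc n)
  have f: "fact (2 * Suc n) = (2*real n+2)*(2*real n+1) * (fact (2*n) :: real)"
    by (simp add: algebra_simps)
  have p: "(\<Prod>k=1..Suc n. (4*real k^2) / (4*real k^2 - 1)) = (\<Prod>k=1..n. (4*real k^2) / (4*real k^2 - 1)) * ((4*real (Suc n)^2) / (4*real (Suc n)^2 - 1))"
    by (simp add: prod.nat_ivl_Suc')
  have q: "4*real (Suc n)^2 - 1 = (2*real n+1)*(2*real n+3)" by (simp add: power2_eq_square algebra_simps)
  have g: "fact (Suc n) = (real n + 1) * (fact n :: real)" by simp
  have nz: "(fact n :: real) > 0" "(fact (2*n) :: real) > 0" by auto
  have key: "16^n * (fact n)^4 / ((fact (2*n))^2 * (2*real n+1)) * (4*(real (Suc n))^2 / ((2*real n+1)*(2*real n+3))) =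
     16^(Suc n) * ((real n+1)*fact n)^4 / (((2*real n+2)*(2*real n+1)*fact (2*n))^2 * (2*real (Suc n)+1))"
  proof -
    define A B N c where "A = (fact n :: real)" "B = (fact (2*n)::real)" "N = real n" "c = (16::real)^n"
    have h: "A > 0" "B > 0" "N \<ge> 0" using nz by (auto simp: A_B_N_c_def)
    have e: "16^(Suc n) = 16*c" "2*real (Suc n)+1 = 2*N+3" by (auto simp: A_B_N_c_def)
    have "c * A^4 / (B^2 * (2*N+1)) * (4*(N+1)^2 / ((2*N+1)*(2*N+3))) =
     (16*c) * ((N+1)*A)^4 / (((2*N+2)*(2*N+1)*B)^2 * (2*N+3))"
    proof -
    have p: "2*N+1 > 0" "2*N+3 > 0" "2*N+2 > 0" using h by auto
    have d1: "(B^2 * (2*N+1)) * ((2*N+1)*(2*N+3)) \<noteq> 0" using p h by simp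
    have d2: "((2*N+2)*(2*N+1)*B)^2 * (2*N+3) \<noteq> 0" using p h by simp
    show ?thesis
      unfolding times_divide_times_eq frac_eq_eq[OF d1 d2]
      by (simp add: algebra_simps power2_eq_square power4_eq_xxxx)
    qed
    thus ?thesis unfolding e by (simp add: A_B_N_c_def add.commute)
  qed
  show ?case unfolding p Suc.IH f q g by (rule key)
qed


definition WP :: "nat \<Rightarrow> real" where
  "WP n = (\<Prod>k=1..n. (4*real k^2) / (4*real k^2 - 1))"

lemma WP_ge1: "WP n \<ge> 1"
  unfolding WP_def
proof (rule prod_ge_1)
  fix k assume "k \<in> {1..n}"
  hence k: "real k \<ge> 1" by auto
  hence "4*real k^2 - 1 > 0" using one_le_power[OF k, of 2] by linarith
  thus "1 \<le> 4*real k^2 / (4*real k^2 - 1)" by simp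
qed

lemma ln_WP:
  assumes "n \<ge> 1"
  shows "ln (WP n) = 4 * rr n - 2 * rr (2*n) + ln (real n) - ln 2 - ln (2*real n+1)"
proof -
  have pos: "(16::real)^n > 0" "(fact n :: real)^4 > 0" "(fact (2*n) :: real)^2 > 0" "2*real n+1 > 0" by auto
  have "ln (WP n) = ln (16^n) + ln ((fact n)^4) - (ln ((fact (2*n))^2) + ln (2*real n+1))"
    unfolding WP_def wallis_id using pos by (simp add: ln_div ln_mult)
  also have "ln ((16::real)^n) = real n * (4 * ln 2)"
    using ln_realpow[of 2 4] by (simp add: ln_realpow)
  also have "ln ((fact n :: real)^4) = 4 * ln (fact n)" by (simp add: ln_realpow)
  also have "ln ((fact (2*n) :: real)^2) = 2 * ln (fact (2*n))" by (simp add: ln_realpow)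
  also have "ln (fact n :: real) = rr n + (real n + 1/2) * ln (real n) - real n" unfolding rr_def by simp
  also have "ln (fact (2*n) :: real) = rr (2*n) + (2*real n + 1/2) * (ln 2 + ln (real n)) - 2*real n"
    unfolding rr_def using assms by (simp add: ln_mult)
  finally show ?thesis by (simp add: algebra_simps)
qed

lemma rr_dec: assumes "n \<ge> 1" shows "rr (Suc n) \<le> rr n"
proof -
  have "1/(12*(real n+2)) \<le> 1/(12*(real n+1))"
    by (rule divide_left_mono) (auto intro: mult_pos_pos)
  thus ?thesis using rr_diff_lower[OF assms] by linarith
qed

lemma rr_mono:
  assumes "1 \<le> n" "n \<le> m" shows "rr m \<le> rr n"
  using assms(2)
proof (induction m rule: dec_induct)
  case base show ?case by simp
next
  case (step k) then show ?case using rr_dec[of k] assms(1) by linarith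
qed

lemma ln_upper2:
  fixes t :: real assumes "0 \<le> t" "t \<le> 1/3"
  shows "ln (1+t) - ln (1-t) \<le> 2*t + t^3"
proof -
  let ?f = "\<lambda>x::real. 2*x + x^3 - (ln (1+x) - ln (1-x))"
  have "?f 0 \<le> ?f t"
  proof (rule DERIV_nonneg_imp_nondecreasing[OF assms(1)])
    fix x assume x: "0 \<le> x" "x \<le> t"
    hence x1: "x \<le> 1/3" using assms by simp
    have "DERIV ?f x :> (2 + 3*x^2 - (1/(1+x) - (-1)/(1-x)))"
      using x x1 by (auto intro!: derivative_eq_intros)
    moreover have "2 + 3*x^2 - (1/(1+x) - (-1)/(1-x)) = x^2*(1-3*x^2)/(1-x^2)"
    proof -
      have "x*x \<le> (1/3)*(1/3)" by (rule mult_mono) (use x x1 in auto)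
      hence "1 - x^2 > 0" "1+x>0" "1-x>0" using x x1 by (auto simp: power2_eq_square)
      thus ?thesis by (simp add: field_simps power2_eq_square power4_eq_xxxx)
    qed
    moreover have "x^2*(1-3*x^2)/(1-x^2) \<ge> 0"
    proof -
      have "x^2 \<le> 1/9" using x x1 power_mono[of x "1/3" 2] by (simp add: power2_eq_square)
      thus ?thesis by (intro divide_nonneg_nonneg mult_nonneg_nonneg) auto
    qed
    ultimately show "\<exists>y. DERIV ?f x :> y \<and> y \<ge> 0" by auto
  qed
  thus ?thesis by simp
qed

lemma rr_diff_upper:
  assumes "n \<ge> 1"
  shows "rr n - rr (Suc n) \<le> 1/(8*real n) - 1/(8*(real n+1))"
proof -
  define t :: real where "t = 1/(2*real n+1)"
  have t0: "0 \<le> t" "t \<le> 1/3" using assms by (auto simp: t_def field_simps)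
  have e1: "1 + t = (2*n+2)/(2*n+1)" "1 - t = 2*n/(2*n+1)" using assms by (auto simp: t_def field_simps)
  have "ln (1+t) - ln (1-t) = ln (real n + 1) - ln (real n)"
    unfolding e1 using assms ln_mult[of 2 "real n+1"] ln_mult[of "real n" 2] by (simp add: ln_div algebra_simps)
  with ln_upper2[OF t0] have L: "ln (real n + 1) - ln (real n) \<le> 2*t + t^3" by simp
  have "(real n + 1/2) * (2*t + t^3) - 1 = t^2/2"
  proof -
    have tu: "(2*real n+1)*t = 1" unfolding t_def by simp
    have "(real n + 1/2) * (2*t + t^3) = ((2*real n+1)*t) * (1 + t^2/2)"
      by (simp add: algebra_simps power2_eq_square power3_eq_cube)
    also have "\<dots> = 1 + t^2/2" using tu by simp
    finally show ?thesis by simp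
  qed
  moreover have "(real n + 1/2) * (ln (real n + 1) - ln (real n)) \<le> (real n + 1/2) * (2*t + t^3)"
    using L by (intro mult_left_mono) auto
  moreover have "t^2/2 \<le> 1/(8*real n) - 1/(8*(real n+1))"
  proof -
    have g: "\<And>a b::real. a > 0 \<Longrightarrow> b = a + 1 \<Longrightarrow> 1/(8*a) - 1/(8*b) = 1/(8*(a*b))"
      by (simp add: field_simps)
    have "1/(8*real n) - 1/(8*(real n+1)) = 1/(8*(real n*(real n+1)))"
      by (rule g) (use assms in auto)
    moreover have "t^2/2 = 1/(2*(2*real n+1)^2)" unfolding t_def by (simp add: power_divide)
    moreover have "1/(2*(2*real n+1)^2) \<le> 1/(8*(real n*(real n+1)))"
    proof -
      have a: "8*(real n*(real n+1)) \<le> 2*(2*real n+1)^2"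
        by (simp add: power2_eq_square algebra_simps)
      have b: "0 < 2*(2*real n+1)^2 * (8*(real n*(real n+1)))"
        using assms by (intro mult_pos_pos) auto
      show ?thesis using divide_left_mono[OF a _ b, of 1] by simp
    qed
    ultimately show ?thesis by simp
  qed
  ultimately show ?thesis using rr_diff[OF assms] by linarith
qed

lemma rr_nonneg:
  assumes "n \<ge> 1" shows "rr n \<ge> 0"
proof -
  have "rr n - 1/(8*real n) \<ge> 7/8"
    using assms
  proof (induction n rule: dec_induct)
    case base show ?case by (simp add: rr_def)
  next
    case (step k)
    have "1/(8*real (Suc k)) = 1/(8*(real k+1))" by simp
    then show ?case using rr_diff_upper[of k] step by linarith
  qed
  moreover have "1/(8*real n) \<ge> 0" by simp
  ultimately show ?thesis by linarith
qed

definition SS :: "nat \<Rightarrow> real" where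
  "SS m = rr (Suc m) - 1/(12*(real m+2))"

lemma SS_dec: "decseq SS"
proof (rule decseq_SucI)
  fix m
  have "rr (Suc m) - rr (Suc (Suc m)) \<ge> 1/(12*(real (Suc m)+1)) - 1/(12*(real (Suc m)+2))"
    by (rule rr_diff_lower) simp
  thus "SS (Suc m) \<le> SS m" unfolding SS_def by (simp add: algebra_simps)
qed

lemma SS_lower: "SS m \<ge> -1"
proof -
  have "rr (Suc m) \<ge> 0" by (rule rr_nonneg) simp
  moreover have "1/(12*(real m+2)) \<le> 1" by simp
  ultimately show ?thesis unfolding SS_def by linarith
qed

lemma rr_lower:
  assumes "n \<ge> 1"
  shows "rr n \<ge> ln (2*pi)/2 + 1/(12*(real n+1))"
proof -
  obtain L where L: "SS \<longlonglongrightarrow> L" "\<forall>i. L \<le> SS i"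
    using decseq_convergent[OF SS_dec, of "-1"] SS_lower by blast
  define R where "R m = rr (Suc m)" for m
  have R: "R \<longlonglongrightarrow> L"
  proof -
    have "(\<lambda>m. SS m + 1/(12*(real m+2))) \<longlonglongrightarrow> L + 0"
      by (intro tendsto_add L(1)) real_asymp
    thus ?thesis unfolding SS_def R_def by simp
  qed
  have R2: "(\<lambda>m. R (2*m+1)) \<longlonglongrightarrow> L"
  proof -
    have "strict_mono (\<lambda>m::nat. 2*m+1)" by (rule strict_monoI) simp
    from LIMSEQ_subseq_LIMSEQ[OF R this] show ?thesis by (simp add: o_def)
  qed
  have lg: "(\<lambda>m. ln (real (Suc m)) - ln 2 - ln (2*real (Suc m)+1)) \<longlonglongrightarrow> - ln 2 - ln 2"
    by real_asymp
  have A: "(\<lambda>m. ln (WP (Suc m))) \<longlonglongrightarrow> 4*L - 2*L + (- ln 2 - ln 2)"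
  proof -
    have "(\<lambda>m. 4 * R m - 2 * R (2*m+1) + (ln (real (Suc m)) - ln 2 - ln (2*real (Suc m)+1))) \<longlonglongrightarrow> 4*L - 2*L + (- ln 2 - ln 2)"
      by (intro tendsto_intros R R2 lg)
    moreover have "ln (WP (Suc m)) = 4 * R m - 2 * R (2*m+1) + (ln (real (Suc m)) - ln 2 - ln (2*real (Suc m)+1))" for m
      unfolding R_def using ln_WP[of "Suc m"] by simp
    ultimately show ?thesis by simp
  qed
  have B: "(\<lambda>m. ln (WP (Suc m))) \<longlonglongrightarrow> ln (pi/2)"
  proof -
    have "WP \<longlonglongrightarrow> pi/2" unfolding WP_def by (rule wallis)
    hence "(\<lambda>m. WP (Suc m)) \<longlonglongrightarrow> pi/2" by (rule LIMSEQ_Suc)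
    thus ?thesis by (rule tendsto_ln) simp
  qed
  have "ln (pi/2) = 2*L - 2 * ln 2" using LIMSEQ_unique[OF B A] by simp
  hence "L = (ln pi + ln 2)/2" by (simp add: ln_div)
  hence Lv: "L = ln (2*pi)/2" by (simp add: ln_mult)
  have "SS (n-1) \<ge> L" using L(2) by blast
  thus ?thesis using assms unfolding SS_def Lv by (simp add: of_nat_diff add.commute)
qed

lemma xseq_eq:
  assumes "n \<ge> 1"
  shows "xseq n = (real n * ln (real n + 1) - ln (fact n)) / (real n * (real n + 1))"
proof -
  have p: "ell (n+1) > 0" "ell n > 0" using assms by (auto simp: ell_def)
  have "xseq n = ln (ell (n+1)) - ln (ell n)" unfolding xseq_def using p by (simp add: ln_div)
  also have "ln (ell (n+1)) = ln (fact (n+1)) / real (n+1)" unfolding ell_def by (simp add: ln_root)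
  also have "ln (ell n) = ln (fact n) / real n" unfolding ell_def using assms by (simp add: ln_root)
  also have "ln (fact (n+1) :: real) = ln (real n + 1) + ln (fact n)" using ln_fact_Suc[of n] by simp
  finally show ?thesis using assms by (simp add: field_simps)
qed

lemma poly_ineq0:
  fixes n m :: real assumes "n \<ge> 2" "m = n + 1"
  shows "1 - 1/(2*n) + 1/(3*n^2) - 1/(12*m) \<le> 1 - 83*m/(144*n^2) + 3*m/(2*n^3)"
proof -
  have p: "n > 0" "m > 0" using assms by auto
  have "(1 - 83*m/(144*n^2) + 3*m/(2*n^3)) - (1 - 1/(2*n) + 1/(3*n^2) - 1/(12*m))
        = (n^3 + 74*n^2 + 301*n + 216) / (144*n^3*m)"
    using p apply (simp add: field_simps power2_eq_square power3_eq_cube)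
    apply (simp add: assms(2) algebra_simps)
    done
  moreover have "(n^3 + 74*n^2 + 301*n + 216) / (144*n^3*m) \<ge> 0"
    using p by (intro divide_nonneg_nonneg) auto
  ultimately show ?thesis by linarith
qed

lemma poly_ineq:
  fixes n :: real assumes "n \<ge> 2"
  shows "1 - 1/(2*n) + 1/(3*n^2) - 1/(12*(n+1)) \<le> 1 - 83*(n+1)/(144*n^2) + 3*(n+1)/(2*n^3)"
  using poly_ineq0[OF assms refl] .

theorem mainTheorem6:
  shows "(\<forall>n::nat. n \<ge> 2 \<longrightarrow>
            xseq n \<le> 1 / real n - ln (real n) / (2 * real n * (real n + 1))
                     - ln (2 * pi) / (2 * real n * (real n + 1))
                     - 83 / (144 * real n ^ 3) + 3 / (2 * real n ^ 4))
       \<and> (\<forall>n::nat. n \<ge> 3 \<longrightarrow>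
            xseq n \<le> 1 / real n - ln (real n) / (2 * real n * (real n + 1))
                     - ln (2 * pi) / (2 * real n * (real n + 1)))"
proof -
  have common: "real n * ln (real n + 1) - ln (fact n) \<le>
      real n * ln (1 + 1/real n) + real n - ln (real n)/2 - ln (2*pi)/2 - 1/(12*(real n+1))"
    if n: "n \<ge> 1" for n :: nat
  proof -
    have "1 + 1/real n = (real n + 1)/real n" using n by (simp add: field_simps)
    hence "ln (1 + 1/real n) = ln (real n + 1) - ln (real n)" using n by (simp add: ln_div)
    hence "ln (real n + 1) = ln (real n) + ln (1 + 1/real n)" by simp
    moreover have "ln (fact n) = rr n + (real n + 1/2) * ln (real n) - real n" unfolding rr_def by simp
    moreover note rr_lower[OF n]
    ultimately show ?thesis by (simp add: algebra_simps)
  qed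
  have D: "real n * (real n + 1) > 0" if "n \<ge> 1" for n :: nat using that by simp
  show ?thesis
  proof (intro conjI allI impI)
    fix n :: nat assume n2: "n \<ge> 2"
    hence n: "n \<ge> 1" and nr: "real n \<ge> 2" by auto
    define a where "a = ln (1 + 1/real n)"
    have "a \<le> 1/real n - (1/real n)^2/2 + (1/real n)^3/3"
      unfolding a_def by (rule ln_upper) simp
    hence "real n * a \<le> real n * (1/real n - (1/real n)^2/2 + (1/real n)^3/3)"
      by (intro mult_left_mono) auto
    also have "\<dots> = 1 - 1/(2*real n) + 1/(3*real n^2)"
      using nr by (simp add: field_simps power2_eq_square power3_eq_cube)
    finally have na: "real n * a \<le> 1 - 1/(2*real n) + 1/(3*real n^2)" .
    define E where "E = real n * (real n + 1) * (1 / real n - ln (real n) / (2 * real n * (real n + 1))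
                     - ln (2 * pi) / (2 * real n * (real n + 1))
                     - 83 / (144 * real n ^ 3) + 3 / (2 * real n ^ 4))"
    have Ee: "E = (real n + 1) - ln (real n)/2 - ln (2*pi)/2 - 83*(real n+1)/(144*real n^2) + 3*(real n+1)/(2*real n^3)"
    proof -
      have g: "\<And>N M l c :: real. N > 0 \<Longrightarrow> M > 0 \<Longrightarrow>
         N * M * (1 / N - l / (2 * N * M) - c / (2 * N * M) - 83 / (144 * N ^ 3) + 3 / (2 * N ^ 4))
         = M - l/2 - c/2 - 83*M/(144*N^2) + 3*M/(2*N^3)"
        by (simp add: field_simps power2_eq_square power3_eq_cube power4_eq_xxxx)
      show ?thesis unfolding E_def using nr by (intro g) auto
    qed
    have num: "real n * ln (real n + 1) - ln (fact n) \<le> E"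
      using common[OF n] na poly_ineq[OF nr] unfolding Ee a_def by linarith
    show "xseq n \<le> 1 / real n - ln (real n) / (2 * real n * (real n + 1))
                     - ln (2 * pi) / (2 * real n * (real n + 1))
                     - 83 / (144 * real n ^ 3) + 3 / (2 * real n ^ 4)"
      unfolding xseq_eq[OF n] using num D[OF n] unfolding E_def by (simp add: divide_le_eq mult.commute)
  next
    fix n :: nat assume n3: "n \<ge> 3"
    hence n: "n \<ge> 1" and nr: "real n \<ge> 1" by auto
    have "ln (1 + 1/real n) \<le> 1/real n" by (rule ln_add_one_self_le_self) simp
    hence "real n * ln (1 + 1/real n) \<le> real n * (1/real n)" by (intro mult_left_mono) auto
    hence na: "real n * ln (1 + 1/real n) \<le> 1" using nr by simp
    define E where "E = real n * (real n + 1) * (1 / real n - ln (real n) / (2 * real n * (real n + 1))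
                     - ln (2 * pi) / (2 * real n * (real n + 1)))"
    have g: "\<And>N M l c :: real. N > 0 \<Longrightarrow> M > 0 \<Longrightarrow>
       N * M * (1 / N - l / (2 * N * M) - c / (2 * N * M)) = M - l/2 - c/2"
      by (simp add: field_simps)
    have Ee: "E = (real n + 1) - ln (real n)/2 - ln (2*pi)/2"
      unfolding E_def using nr by (intro g) auto
    have "1/(12*(real n+1)) \<ge> 0" by simp
    hence num: "real n * ln (real n + 1) - ln (fact n) \<le> E"
      using common[OF n] na unfolding Ee by linarith
    show "xseq n \<le> 1 / real n - ln (real n) / (2 * real n * (real n + 1))
                     - ln (2 * pi) / (2 * real n * (real n + 1))"
      unfolding xseq_eq[OF n] using num D[OF n] unfolding E_def by (simp add: divide_le_eq mult.commute)
  qed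
qed

end
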